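(* Let $n$ be a positive integer, $\psi$ analytic on $\mathbb D$ and $\varphi$ an analytic self-map of $\mathbb D$ such that $D_{\psi,\varphi,n}$ is bounded on $H^2$, and suppose $w\in\mathbb D$ with $\varphi(w)=w$. Define $\chi$ on $\mathbb D$ by: $\chi=\psi$ if $\psi^{(j)}(w)=0$ for all $0\le j\le n-1$; $\chi(z)=\psi(z)\big(\frac{w-z}{1-\overline{w}z}\big)^{n-m}$ if $\psi^{(j)}(w)=0$ for $0\le j\le m-1$ and $\psi^{(m)}(w)\ne0$ for some $1\le m<n$; and $\chi(z)=\psi(z)\big(\frac{w-z}{1-\overline{w}z}\big)^{n}$ if $\psi(w)\ne0$. Let $N=\big\lfloor\frac{n}{1-|\varphi'(w)|}\big\rfloor$. Then: (i) if $\varphi'(w)\ne0$, then $\|D_{\psi,\varphi,n}\|_{-1}\ge|\chi^{(n)}(w)|\binom{N}{n}|\varphi'(w)|^{N-n}$; (ii) if $\varphi'(w)=0$, then $\|D_{\psi,\varphi,n}\|_{-1}\ge|\chi^{(n)}(w)|$; (iii) if $\varphi'(w)=0$, $\psi''(w)=0$ and $n=1$, then $\|D_{\psi,\varphi,1}\|_{-1}\ge\max\{|\chi'(w)|,\ |\psi(w)\varphi''(w)|\}$.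
   Context: $H^2$ is the Hardy space of analytic $f$ on the open unit disk $\mathbb D$ with $\|f\|^2=\sup_{0<r<1}\frac1{2\pi}\int_0^{2\pi}|f(re^{i\theta})|^2d\theta<\infty$. $D_{\psi,\varphi,n}f=\psi\cdot(f^{(n)}\circ\varphi)$, and $\|T\|_{-1}$ denotes the operator norm of $T$ on $H^2$. $\lfloor\cdot\rfloor$ is the greatest integer function. *)

theory Defs
  imports "HOL-Analysis.Analysis"
begin

definition H2_mean :: "(complex \<Rightarrow> complex) \<Rightarrow> real \<Rightarrow> real" where
  "H2_mean f r = (1 / (2 * pi)) * integral {0..2*pi} (\<lambda>\<theta>. (cmod (f (of_real r * cis \<theta>)))\<^sup>2)"

definition H2 :: "(complex \<Rightarrow> complex) set" where
  "H2 = {f. f holomorphic_on ball 0 1 \<and> bdd_above (H2_mean f ` {0<..<1})}"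

definition H2_norm :: "(complex \<Rightarrow> complex) \<Rightarrow> real" where
  "H2_norm f = sqrt (SUP r\<in>{0<..<1}. H2_mean f r)"

definition Dop :: "(complex \<Rightarrow> complex) \<Rightarrow> (complex \<Rightarrow> complex) \<Rightarrow> nat
    \<Rightarrow> (complex \<Rightarrow> complex) \<Rightarrow> (complex \<Rightarrow> complex)" where
  "Dop \<psi> \<phi> n f = (\<lambda>z. \<psi> z * (deriv ^^ n) f (\<phi> z))"

definition bounded_on_H2 :: "((complex \<Rightarrow> complex) \<Rightarrow> (complex \<Rightarrow> complex)) \<Rightarrow> bool" where
  "bounded_on_H2 T \<longleftrightarrow> (\<forall>f\<in>H2. T f \<in> H2) \<and> (\<exists>C. \<forall>f\<in>H2. H2_norm (T f) \<le> C * H2_norm f)"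

definition H2_opnorm :: "((complex \<Rightarrow> complex) \<Rightarrow> (complex \<Rightarrow> complex)) \<Rightarrow> real" where
  "H2_opnorm T = Sup {H2_norm (T f) | f. f \<in> H2 \<and> H2_norm f \<le> 1}"

definition chi :: "(complex \<Rightarrow> complex) \<Rightarrow> nat \<Rightarrow> complex \<Rightarrow> (complex \<Rightarrow> complex)" where
  "chi \<psi> n w =
    (if (\<forall>j<n. (deriv ^^ j) \<psi> w = 0) then \<psi>
     else if \<psi> w \<noteq> 0 then (\<lambda>z. \<psi> z * ((w - z) / (1 - cnj w * z)) ^ n)
     else (let m = (LEAST m. (deriv ^^ m) \<psi> w \<noteq> 0)
           in (\<lambda>z. \<psi> z * ((w - z) / (1 - cnj w * z)) ^ (n - m))))"

end

theory Submission
  imports Defs "HOL-Complex_Analysis.Complex_Analysis" "HOL-Complex_Analysis.Riemann_Mapping"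
begin


lemma dlemma:
  fixes h q :: "complex \<Rightarrow> complex"
  assumes S: "open S" and wS: "w \<in> S" and hh: "h holomorphic_on S" and qh: "q holomorphic_on S"
    and eq: "\<And>z. z \<in> S \<Longrightarrow> h z = (z-w)^k * q z" and jk: "j \<le> k"
  shows "\<exists>g. g holomorphic_on S \<and> (\<forall>z\<in>S. (deriv ^^ j) h z = (z-w)^(k-j) * g z)
           \<and> g w = fact k / fact (k-j) * q w"
  using jk
proof (induction j)
  case 0
  then show ?case using qh eq by (intro exI[of _ q]) auto
next
  case (Suc j)
  then obtain g where gh: "g holomorphic_on S" and geq: "\<forall>z\<in>S. (deriv ^^ j) h z = (z-w)^(k-j) * g z"
    and gw: "g w = fact k / fact (k-j) * q w" by auto
  define g2 where "g2 = (\<lambda>z. of_nat (k-j) * g z + (z-w) * deriv g z)"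
  have g2h: "g2 holomorphic_on S" unfolding g2_def using gh S
    by (intro holomorphic_intros holomorphic_deriv) auto
  have "(deriv ^^ Suc j) h z = (z-w)^(k - Suc j) * g2 z" if z: "z \<in> S" for z
  proof -
    have ev: "eventually (\<lambda>x. (deriv ^^ j) h x = (x-w)^(k-j) * g x) (nhds z)"
      using geq z S by (intro eventually_nhds_in_open[THEN eventually_mono]) auto
    have "(deriv ^^ Suc j) h z = deriv (\<lambda>x. (x-w)^(k-j) * g x) z"
      using deriv_cong_ev[OF ev refl] by simp
    also have "\<dots> = of_nat (k-j) * (z-w)^(k-j-1) * g z + (z-w)^(k-j) * deriv g z"
    proof (rule DERIV_imp_deriv)
      have gd: "(g has_field_derivative deriv g z) (at z)"
        using gh S z holomorphic_derivI by blast
      show "((\<lambda>x. (x-w)^(k-j) * g x) has_field_derivative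
          of_nat (k-j) * (z-w)^(k-j-1) * g z + (z-w)^(k-j) * deriv g z) (at z)"
        by (rule derivative_eq_intros gd | simp)+
    qed
    also have "\<dots> = (z-w)^(k - Suc j) * g2 z"
    proof -
      have "k - j = Suc (k - Suc j)" using Suc.prems by simp
      then show ?thesis unfolding g2_def by (simp add: algebra_simps)
    qed
    finally show ?thesis .
  qed
  moreover have "g2 w = fact k / fact (k - Suc j) * q w"
  proof -
    have f: "fact (k-j) = of_nat (k-j) * (fact (k - Suc j) :: complex)"
      using Suc.prems by (metis Suc_diff_le diff_Suc_Suc fact_Suc of_nat_fact of_nat_mult)
    show ?thesis unfolding g2_def using gw f Suc.prems by (simp add: field_simps)
  qed
  ultimately show ?case using g2h by blast
qed

lemma dlemma_at:
  fixes h q :: "complex \<Rightarrow> complex"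
  assumes S: "open S" and wS: "w \<in> S" and hh: "h holomorphic_on S" and qh: "q holomorphic_on S"
    and eq: "\<And>z. z \<in> S \<Longrightarrow> h z = (z-w)^k * q z"
  shows "(deriv ^^ k) h w = fact k * q w"
proof -
  obtain g where "g holomorphic_on S" "\<forall>z\<in>S. (deriv ^^ k) h z = (z-w)^(k-k) * g z"
     "g w = fact k / fact (k-k) * q w" using dlemma[OF S wS hh qh eq, of k] by auto
  then show ?thesis using wS by simp
qed

lemma factor_lemma:
  fixes h :: "complex \<Rightarrow> complex"
  assumes S: "open S" and wS: "w \<in> S" and hh: "h holomorphic_on S"
    and z: "\<And>j. j < k \<Longrightarrow> (deriv ^^ j) h w = 0"
  shows "\<exists>q. q holomorphic_on S \<and> (\<forall>z\<in>S. h z = (z-w)^k * q z) \<and> (deriv ^^ k) h w = fact k * q w"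
  using z
proof (induction k)
  case 0
  then show ?case using hh by (intro exI[of _ h]) auto
next
  case (Suc k)
  then obtain q where qh: "q holomorphic_on S" and qe: "\<forall>z\<in>S. h z = (z-w)^k * q z"
    and qd: "(deriv ^^ k) h w = fact k * q w" by auto
  have qw: "q w = 0" using qd Suc.prems[of k] by simp
  define q2 where "q2 = (\<lambda>z. if z = w then deriv q w else (q z - q w)/(z-w))"
  have q2h: "q2 holomorphic_on S" unfolding q2_def using pole_lemma_open[OF qh S] by simp
  have "\<forall>z\<in>S. h z = (z-w)^Suc k * q2 z"
    using qe qw by (auto simp: q2_def)
  moreover have "(deriv ^^ Suc k) h w = fact (Suc k) * q2 w"
    using dlemma_at[OF S wS hh q2h] calculation by blast
  ultimately show ?case using q2h by blast
qed



lemma circ_in_ball: "0 < r \<Longrightarrow> r < 1 \<Longrightarrow> of_real r * cis t \<in> ball (0::complex) 1"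
  by (simp add: norm_mult)

lemma cont_circ:
  assumes "f holomorphic_on ball 0 1" "0 < r" "r < 1"
  shows "continuous_on S (\<lambda>t. f (of_real r * cis t))"
proof -
  have "continuous_on (ball 0 1) f" using assms(1) holomorphic_on_imp_continuous_on by blast
  moreover have "continuous_on S (\<lambda>t. of_real r * cis t)" by (intro continuous_intros)
  ultimately show ?thesis
    by (rule continuous_on_compose2) (use assms circ_in_ball in auto)
qed

lemma int_circ:
  assumes "f holomorphic_on ball 0 1" "0 < r" "r < 1"
  shows "(\<lambda>t. (cmod (f (of_real r * cis t)))\<^sup>2) integrable_on {a..b}"
  by (intro integrable_continuous_interval continuous_intros cont_circ[OF assms])

lemma H2_mean_nonneg: "0 \<le> H2_mean f r"
proof -
  have "0 \<le> integral {0..2*pi} (\<lambda>\<theta>. (cmod (f (of_real r * cis \<theta>)))\<^sup>2)"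
    by (cases "(\<lambda>\<theta>. (cmod (f (of_real r * cis \<theta>)))\<^sup>2) integrable_on {0..2*pi}")
       (auto intro: integral_nonneg simp: not_integrable_integral)
  then show ?thesis unfolding H2_mean_def by simp
qed

lemma H2_mean_cong:
  assumes "\<And>z. z \<in> ball 0 1 \<Longrightarrow> f z = g z" "0 < r" "r < 1"
  shows "H2_mean f r = H2_mean g r"
  unfolding H2_mean_def using assms circ_in_ball by (intro arg_cong2[where f="(*)"] refl integral_cong) auto

lemma H2_cong:
  assumes "f \<in> H2" "\<And>z. z \<in> ball 0 1 \<Longrightarrow> f z = g z"
  shows "g \<in> H2" "H2_norm g = H2_norm f"
proof -
  have e: "H2_mean g ` {0<..<1} = H2_mean f ` {0<..<1}"
    using H2_mean_cong[OF assms(2)] by (intro image_cong) auto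
  show "g \<in> H2" using assms holomorphic_transform[of f "ball 0 1" g] e unfolding H2_def by auto
  show "H2_norm g = H2_norm f" unfolding H2_norm_def using e by simp
qed

lemma H2_bdd: "f \<in> H2 \<Longrightarrow> bdd_above (H2_mean f ` {0<..<1})" by (simp add: H2_def)
lemma H2_hol: "f \<in> H2 \<Longrightarrow> f holomorphic_on ball 0 1" by (simp add: H2_def)

lemma H2_SUP_nonneg: "0 \<le> (SUP r\<in>{0<..<1}. H2_mean f r)" if "f \<in> H2"
proof -
  have "H2_mean f (1/2) \<le> (SUP r\<in>{0<..<1}. H2_mean f r)"
    by (rule cSUP_upper) (use H2_bdd[OF that] in auto)
  then show ?thesis using H2_mean_nonneg[of f "1/2"] by linarith
qed

lemma H2_norm_nonneg: "f \<in> H2 \<Longrightarrow> 0 \<le> H2_norm f"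
  unfolding H2_norm_def using H2_SUP_nonneg by simp

lemma H2_norm_sq: "f \<in> H2 \<Longrightarrow> H2_norm f ^ 2 = (SUP r\<in>{0<..<1}. H2_mean f r)"
  unfolding H2_norm_def using H2_SUP_nonneg by simp

lemma H2_mean_le: "f \<in> H2 \<Longrightarrow> 0 < r \<Longrightarrow> r < 1 \<Longrightarrow> H2_mean f r \<le> H2_norm f ^ 2"
  unfolding H2_norm_sq by (rule cSUP_upper) (auto simp: H2_bdd)

lemma H2_mult:
  assumes f: "f \<in> H2" and bh: "\<beta> holomorphic_on ball 0 1" and b1: "\<And>z. z \<in> ball 0 1 \<Longrightarrow> cmod (\<beta> z) \<le> 1"
  shows "(\<lambda>z. \<beta> z * f z) \<in> H2" "H2_norm (\<lambda>z. \<beta> z * f z) \<le> H2_norm f"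
proof -
  have fh: "f holomorphic_on ball 0 1" using f H2_hol by auto
  have gh: "(\<lambda>z. \<beta> z * f z) holomorphic_on ball 0 1" using fh bh by (intro holomorphic_intros)
  have le: "H2_mean (\<lambda>z. \<beta> z * f z) r \<le> H2_mean f r" if r: "0 < r" "r < 1" for r
  proof -
    have "integral {0..2*pi} (\<lambda>\<theta>. (cmod (\<beta> (of_real r * cis \<theta>) * f (of_real r * cis \<theta>)))\<^sup>2)
        \<le> integral {0..2*pi} (\<lambda>\<theta>. (cmod (f (of_real r * cis \<theta>)))\<^sup>2)"
    proof (rule integral_le)
      show "(\<lambda>\<theta>. (cmod (\<beta> (of_real r * cis \<theta>) * f (of_real r * cis \<theta>)))\<^sup>2) integrable_on {0..2*pi}"
        using int_circ[OF gh r] by simp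
      show "(\<lambda>\<theta>. (cmod (f (of_real r * cis \<theta>)))\<^sup>2) integrable_on {0..2*pi}"
        using int_circ[OF fh r] by simp
      fix t
      have "cmod (\<beta> (of_real r * cis t)) \<le> 1" using b1 circ_in_ball r by auto
      then have "cmod (\<beta> (of_real r * cis t)) * cmod (f (of_real r * cis t)) \<le> cmod (f (of_real r * cis t))"
        by (simp add: mult_left_le_one_le)
      then show "(cmod (\<beta> (of_real r * cis t) * f (of_real r * cis t)))\<^sup>2 \<le> (cmod (f (of_real r * cis t)))\<^sup>2"
        by (simp add: norm_mult power_mono)
    qed
    then show ?thesis unfolding H2_mean_def by (simp add: divide_right_mono)
  qed
  have bd: "bdd_above (H2_mean (\<lambda>z. \<beta> z * f z) ` {0<..<1})"
  proof -
    obtain B where "\<forall>x\<in>H2_mean f ` {0<..<1}. x \<le> B" using H2_bdd[OF f] by (auto simp: bdd_above_def)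
    then have "\<forall>x\<in>H2_mean (\<lambda>z. \<beta> z * f z) ` {0<..<1}. x \<le> B"
      using le by (fastforce intro: order_trans)
    then show ?thesis unfolding bdd_above_def by blast
  qed
  then show g: "(\<lambda>z. \<beta> z * f z) \<in> H2" using gh unfolding H2_def by auto
  have "(SUP r\<in>{0<..<1}. H2_mean (\<lambda>z. \<beta> z * f z) r) \<le> (SUP r\<in>{0<..<1}. H2_mean f r)"
    by (rule cSUP_mono) (use le H2_bdd[OF f] in force)+
  then show "H2_norm (\<lambda>z. \<beta> z * f z) \<le> H2_norm f" unfolding H2_norm_def by simp
qed

lemma SUP_scale:
  fixes m :: "real \<Rightarrow> real"
  assumes bd: "bdd_above (m ` A)" and ne: "A \<noteq> {}" and a: "0 \<le> a"
  shows "(SUP r\<in>A. a * m r) = a * (SUP r\<in>A. m r)"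
proof (cases "a = 0")
  case True then show ?thesis using ne by simp
next
  case False
  then have a0: "0 < a" using a by simp
  have up: "a * m r \<le> a * (SUP r\<in>A. m r)" if "r \<in> A" for r
    using that bd a by (intro mult_left_mono cSUP_upper) auto
  have bd2: "bdd_above ((\<lambda>r. a * m r) ` A)" using up unfolding bdd_above_def by blast
  show ?thesis
  proof (rule antisym)
    show "(SUP r\<in>A. a * m r) \<le> a * (SUP r\<in>A. m r)" using up ne by (intro cSUP_least) auto
    have "(SUP r\<in>A. m r) \<le> (SUP r\<in>A. a * m r) / a"
    proof (rule cSUP_least[OF ne])
      fix r assume r: "r \<in> A"
      have "a * m r \<le> (SUP r\<in>A. a * m r)" using bd2 r by (intro cSUP_upper) auto
      then show "m r \<le> (SUP r\<in>A. a * m r) / a" using a0 by (simp add: field_simps)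
    qed
    then show "a * (SUP r\<in>A. m r) \<le> (SUP r\<in>A. a * m r)" using a0 by (simp add: field_simps)
  qed
qed

lemma H2_scale:
  assumes f: "f \<in> H2"
  shows "(\<lambda>z. c * f z) \<in> H2" "H2_norm (\<lambda>z. c * f z) = cmod c * H2_norm f"
proof -
  have fh: "f holomorphic_on ball 0 1" using f H2_hol by auto
  have me: "H2_mean (\<lambda>z. c * f z) r = (cmod c)^2 * H2_mean f r" if r: "0 < r" "r < 1" for r
  proof -
    have "integral {0..2*pi} (\<lambda>\<theta>. (cmod (c * f (of_real r * cis \<theta>)))\<^sup>2)
       = integral {0..2*pi} (\<lambda>\<theta>. (cmod c)^2 * (cmod (f (of_real r * cis \<theta>)))\<^sup>2)"
      by (simp add: norm_mult power_mult_distrib)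
    also have "\<dots> = (cmod c)^2 * integral {0..2*pi} (\<lambda>\<theta>. (cmod (f (of_real r * cis \<theta>)))\<^sup>2)"
      using integral_mult[OF int_circ[OF fh r]] by simp
    finally show ?thesis unfolding H2_mean_def by simp
  qed
  have e: "(SUP r\<in>{0<..<1}. H2_mean (\<lambda>z. c * f z) r) = (cmod c)^2 * (SUP r\<in>{0<..<1}. H2_mean f r)"
  proof -
    have "(SUP r\<in>{0<..<1}. H2_mean (\<lambda>z. c * f z) r) = (SUP r\<in>{0<..<1}. (cmod c)^2 * H2_mean f r)"
      using me by (intro SUP_cong) auto
    then show ?thesis using SUP_scale[OF H2_bdd[OF f], of "(cmod c)^2"] by simp
  qed
  have bd: "bdd_above (H2_mean (\<lambda>z. c * f z) ` {0<..<1})"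
  proof -
    have "H2_mean (\<lambda>z. c * f z) r \<le> (cmod c)^2 * (SUP r\<in>{0<..<1}. H2_mean f r)" if "r \<in> {0<..<1}" for r
      using me[of r] that H2_bdd[OF f] by (auto intro!: mult_left_mono cSUP_upper)
    then show ?thesis unfolding bdd_above_def by blast
  qed
  show "(\<lambda>z. c * f z) \<in> H2" using bd fh unfolding H2_def by (auto intro!: holomorphic_intros)
  show "H2_norm (\<lambda>z. c * f z) = cmod c * H2_norm f"
    unfolding H2_norm_def e by (simp add: real_sqrt_mult)
qed

lemma H2_zero: "(\<lambda>z. 0) \<in> H2" "H2_norm (\<lambda>z. 0) = 0"
proof -
  have m: "H2_mean (\<lambda>z. 0) r = 0" for r unfolding H2_mean_def by simp
  show "(\<lambda>z. 0) \<in> H2" unfolding H2_def by (auto simp: m)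
  show "H2_norm (\<lambda>z. 0) = 0" unfolding H2_norm_def by (simp add: m)
qed

lemma H2_one: "(\<lambda>z. 1) \<in> H2"
proof -
  have m: "H2_mean (\<lambda>z. 1) r = 1" for r unfolding H2_mean_def by simp
  show "(\<lambda>z. 1) \<in> H2" unfolding H2_def by (auto simp: m)
qed



lemma circ_eq: "circlepath 0 \<rho> t = of_real \<rho> * cis (2*pi*t)"
  by (simp add: circlepath cis_conv_exp mult_ac)

lemma J2_eq:
  assumes hh: "h holomorphic_on ball 0 1" and r: "0 < \<rho>" "\<rho> < 1"
  shows "integral {0..1} (\<lambda>t. (cmod (h (circlepath 0 \<rho> t)))\<^sup>2) = H2_mean h \<rho>"
proof -
  define g where "g = (\<lambda>\<theta>. (cmod (h (of_real \<rho> * cis \<theta>)))\<^sup>2)"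
  have "integral ((\<lambda>x. x / (2*pi)) ` {0..2*pi}) (\<lambda>x. g (2*pi * x)) = (1 / \<bar>2*pi\<bar>) *\<^sub>R integral {0..2*pi} g"
    by (rule integral_stretch_real) simp
  moreover have "(\<lambda>x. x / (2*pi)) ` {0..2*pi} = {0..1}" by simp
  ultimately have "integral {0..1} (\<lambda>x. g (2*pi * x)) = 1 / (2*pi) * integral {0..2*pi} g" by simp
  then show ?thesis unfolding H2_mean_def g_def circ_eq by simp
qed

lemma amgm_int:
  assumes hh: "h holomorphic_on ball 0 1" and r: "0 < \<rho>" "\<rho> < 1" and s: "0 < s"
  shows "integral {0..1} (\<lambda>t. cmod (h (circlepath 0 \<rho> t))) \<le> (s * H2_mean h \<rho> + 1/s) / 2"
proof -
  have c: "continuous_on {0..1} (\<lambda>t. h (circlepath 0 \<rho> t))"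
  proof -
    have "continuous_on (ball 0 1) h" using hh holomorphic_on_imp_continuous_on by blast
    moreover have "continuous_on {0..1} (\<lambda>t. of_real \<rho> * cis (2*pi*t))" by (intro continuous_intros)
    ultimately show ?thesis unfolding circ_eq
      by (rule continuous_on_compose2) (use r circ_in_ball in auto)
  qed
  have i1: "(\<lambda>t. cmod (h (circlepath 0 \<rho> t))) integrable_on {0..1}"
    by (intro integrable_continuous_interval continuous_intros c; simp)
  have i2: "(\<lambda>t. (s * (cmod (h (circlepath 0 \<rho> t)))\<^sup>2 + 1/s) / 2) integrable_on {0..1}"
    by (intro integrable_continuous_interval continuous_intros c; simp)
  have "integral {0..1} (\<lambda>t. cmod (h (circlepath 0 \<rho> t))) \<le> integral {0..1} (\<lambda>t. (s * (cmod (h (circlepath 0 \<rho> t)))\<^sup>2 + 1/s) / 2)"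
  proof (rule integral_le[OF i1 i2])
    fix t
    define x where "x = cmod (h (circlepath 0 \<rho> t))"
    have "0 \<le> (s * x - 1)^2 / s" using s by simp
    then have "x \<le> (s * x\<^sup>2 + 1/s) / 2" using s by (simp add: field_simps power2_eq_square)
    then show "cmod (h (circlepath 0 \<rho> t)) \<le> (s * (cmod (h (circlepath 0 \<rho> t)))\<^sup>2 + 1/s) / 2" by (simp add: x_def)
  qed
  also have "\<dots> = (s * H2_mean h \<rho> + 1/s) / 2"
  proof -
    have i3: "(\<lambda>t. (cmod (h (circlepath 0 \<rho> t)))\<^sup>2) integrable_on {0..1}"
      by (intro integrable_continuous_interval continuous_intros c; simp)
    have "integral {0..1} (\<lambda>t. (s * (cmod (h (circlepath 0 \<rho> t)))\<^sup>2 + 1/s) / 2)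
       = (s * integral {0..1} (\<lambda>t. (cmod (h (circlepath 0 \<rho> t)))\<^sup>2) + 1/s) / 2"
    proof -
      have i4: "(\<lambda>t. s * (cmod (h (circlepath 0 \<rho> t)))\<^sup>2) integrable_on {0..1}"
        using integrable_on_cmult_left[OF i3, of s] by simp
      have "integral {0..1} (\<lambda>t. s * (cmod (h (circlepath 0 \<rho> t)))\<^sup>2 + 1/s)
          = integral {0..1} (\<lambda>t. s * (cmod (h (circlepath 0 \<rho> t)))\<^sup>2) + integral {0..1} (\<lambda>t::real. 1/s)"
        using integral_add[OF i4 integrable_const_ivl[of "1/s" "0::real" 1]] by simp
      also have "\<dots> = s * integral {0..1} (\<lambda>t. (cmod (h (circlepath 0 \<rho> t)))\<^sup>2) + 1/s"
        using integral_mult[OF i3, of s] by simp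
      finally show ?thesis by (simp add: integral_divide)
    qed
    then show ?thesis using J2_eq[OF hh r] by simp
  qed
  finally show ?thesis .
qed

lemma cauchy_bound:
  assumes hh: "h holomorphic_on ball 0 1" and w: "cmod w < 1"
  defines "\<rho> \<equiv> (1 + cmod w) / 2"
  shows "cmod ((deriv ^^ K) h w) \<le> fact K * \<rho> / (\<rho> - cmod w)^(Suc K) * integral {0..1} (\<lambda>t. cmod (h (circlepath 0 \<rho> t)))"
proof -
  define \<delta> where "\<delta> = \<rho> - cmod w"
  have \<delta>: "0 < \<delta>" using w unfolding \<delta>_def \<rho>_def by simp
  have r: "0 < \<rho>" "\<rho> < 1" using w norm_ge_zero[of w] unfolding \<rho>_def by (auto simp: add_pos_nonneg)
  define D where "D = (deriv ^^ K) h w"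
  have sub: "cball 0 \<rho> \<subseteq> ball (0::complex) 1" using r by auto
  have ci: "((\<lambda>u. h u / (u-w) ^ (Suc K)) has_contour_integral ((2 * pi * \<i>) / (fact K) * D)) (circlepath 0 \<rho>)"
    unfolding D_def
  proof (rule Cauchy_has_contour_integral_higher_derivative_circlepath)
    show "continuous_on (cball 0 \<rho>) h"
      using holomorphic_on_imp_continuous_on[OF hh] sub continuous_on_subset by blast
    show "h holomorphic_on ball 0 \<rho>" using hh sub ball_subset_cball holomorphic_on_subset by blast
    show "w \<in> ball 0 \<rho>" using \<delta> unfolding \<delta>_def by simp
  qed
  define G where "G = (\<lambda>t. h (circlepath 0 \<rho> t) / (circlepath 0 \<rho> t - w) ^ (Suc K) * vector_derivative (circlepath 0 \<rho>) (at t))"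
  have hi: "(G has_integral ((2 * pi * \<i>) / (fact K) * D)) {0..1}"
    using ci unfolding has_contour_integral G_def .
  have c: "continuous_on {0..1} (\<lambda>t. h (circlepath 0 \<rho> t))"
  proof -
    have "continuous_on (ball 0 1) h" using hh holomorphic_on_imp_continuous_on by blast
    moreover have "continuous_on {0..1} (\<lambda>t. of_real \<rho> * cis (2*pi*t))" by (intro continuous_intros)
    ultimately show ?thesis unfolding circ_eq
      by (rule continuous_on_compose2) (use r circ_in_ball in auto)
  qed
  have bnd: "norm (G t) \<le> 2 * pi * \<rho> / \<delta>^(Suc K) * cmod (h (circlepath 0 \<rho> t))" if t: "t \<in> {0..1}" for t
  proof -
    have vd: "vector_derivative (circlepath 0 \<rho>) (at t) = 2 * pi * \<i> * \<rho> * exp (2 * of_real pi * \<i> * t)"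
      by (rule vector_derivative_at) (rule has_vector_derivative_circlepath)
    have nvd: "norm (vector_derivative (circlepath 0 \<rho>) (at t)) = 2 * pi * \<rho>"
    proof -
      have "exp (2 * of_real pi * \<i> * t) = cis (2*pi*t)" by (simp add: cis_conv_exp mult_ac)
      then show ?thesis unfolding vd using r by (simp add: norm_mult)
    qed
    have ng: "norm (circlepath 0 \<rho> t) = \<rho>" unfolding circ_eq using r by (simp add: norm_mult)
    have "\<delta> \<le> norm (circlepath 0 \<rho> t - w)"
      using norm_triangle_ineq2[of "circlepath 0 \<rho> t" w] ng unfolding \<delta>_def by linarith
    then have dle: "\<delta>^(Suc K) \<le> norm (circlepath 0 \<rho> t - w) ^ (Suc K)"
      using \<delta> by (intro power_mono) auto
    have "norm (G t) = cmod (h (circlepath 0 \<rho> t)) / norm (circlepath 0 \<rho> t - w) ^ (Suc K) * (2 * pi * \<rho>)"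
      unfolding G_def using nvd by (simp add: norm_mult norm_divide norm_power)
    also have "\<dots> \<le> cmod (h (circlepath 0 \<rho> t)) / \<delta>^(Suc K) * (2 * pi * \<rho>)"
    proof -
      have p1: "0 < \<delta>^(Suc K)" using \<delta> by (rule zero_less_power)
      have p2: "0 < norm (circlepath 0 \<rho> t - w) ^ (Suc K)" using p1 dle by linarith
      show ?thesis using dle p1 p2 r
        by (intro mult_right_mono divide_left_mono mult_pos_pos) (auto simp del: power_Suc)
    qed
    finally show ?thesis by (simp add: field_simps)
  qed
  have "norm (integral {0..1} G) \<le> integral {0..1} (\<lambda>t. 2 * pi * \<rho> / \<delta>^(Suc K) * cmod (h (circlepath 0 \<rho> t)))"
    using bnd by (intro integral_norm_bound_integral[OF has_integral_integrable[OF hi]] integrable_continuous_interval continuous_intros c) auto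
  also have "\<dots> = 2 * pi * \<rho> / \<delta>^(Suc K) * integral {0..1} (\<lambda>t. cmod (h (circlepath 0 \<rho> t)))"
    using integral_mult[of "\<lambda>t. cmod (h (circlepath 0 \<rho> t))" "{0..1}" "2 * pi * \<rho> / \<delta>^(Suc K)"]
    by (simp add: integrable_continuous_interval continuous_intros c)
  finally have "2 * pi / fact K * cmod D \<le> 2 * pi * \<rho> / \<delta>^(Suc K) * integral {0..1} (\<lambda>t. cmod (h (circlepath 0 \<rho> t)))"
    using integral_unique[OF hi] by (simp add: norm_mult norm_divide)
  then have "fact K / (2*pi) * (2 * pi / fact K * cmod D) \<le> fact K / (2*pi) * (2 * pi * \<rho> / \<delta>^(Suc K) * integral {0..1} (\<lambda>t. cmod (h (circlepath 0 \<rho> t))))"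
    by (rule mult_left_mono) simp
  then have "cmod D \<le> fact K / (2*pi) * (2 * pi * \<rho> / \<delta>^(Suc K) * integral {0..1} (\<lambda>t. cmod (h (circlepath 0 \<rho> t))))"
    by simp
  then show ?thesis unfolding D_def \<delta>_def by simp
qed

lemma cauchy_H2:
  assumes w: "cmod w < 1"
  shows "\<exists>C. \<forall>h\<in>H2. cmod ((deriv ^^ K) h w) \<le> C * H2_norm h"
proof -
  define \<rho> where "\<rho> = (1 + cmod w) / 2"
  have r: "0 < \<rho>" "\<rho> < 1" using w norm_ge_zero[of w] unfolding \<rho>_def by (auto simp: add_pos_nonneg)
  define A where "A = fact K * \<rho> / (\<rho> - cmod w)^(Suc K)"
  have A: "0 < A" unfolding A_def using r w by (simp add: \<rho>_def)
  have "cmod ((deriv ^^ K) h w) \<le> A * H2_norm h" if h: "h \<in> H2" for h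
  proof -
    define N where "N = H2_norm h"
    have N0: "0 \<le> N" using H2_norm_nonneg[OF h] N_def by simp
    have key: "cmod ((deriv ^^ K) h w) \<le> A * ((s * N^2 + 1/s) / 2)" if s: "0 < s" for s
    proof -
      have "cmod ((deriv ^^ K) h w) \<le> A * integral {0..1} (\<lambda>t. cmod (h (circlepath 0 \<rho> t)))"
        using cauchy_bound[OF H2_hol[OF h] w, of K] unfolding A_def \<rho>_def by simp
      also have "\<dots> \<le> A * ((s * H2_mean h \<rho> + 1/s) / 2)"
        using amgm_int[OF H2_hol[OF h] r s] A by (intro mult_left_mono) auto
      also have "\<dots> \<le> A * ((s * N^2 + 1/s) / 2)"
        using H2_mean_le[OF h r] A s unfolding N_def by (intro mult_left_mono divide_right_mono add_right_mono) auto
      finally show ?thesis .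
    qed
    show ?thesis
    proof (cases "N = 0")
      case False
      then have "0 < N" using N0 by simp
      then show ?thesis using key[of "1/N"] by (simp add: N_def power2_eq_square field_simps)
    next
      case True
      show ?thesis
      proof (rule ccontr)
        assume "\<not> ?thesis"
        then have pos: "0 < cmod ((deriv ^^ K) h w)" using True N_def by simp
        have "cmod ((deriv ^^ K) h w) \<le> A * ((A / cmod ((deriv ^^ K) h w) * N^2 + 1/(A / cmod ((deriv ^^ K) h w))) / 2)"
          using key[of "A / cmod ((deriv ^^ K) h w)"] pos A by simp
        then show False using True pos A by (simp add: field_simps)
      qed
    qed
  qed
  then show ?thesis by blast
qed



lemma pow_le:
  fixes x y A :: real
  assumes x: "0 \<le> x" and y: "0 \<le> y" and h: "\<And>j. x^j \<le> A * y^j"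
  shows "x \<le> y"
proof (rule ccontr)
  assume "\<not> x \<le> y"
  then have xy: "y < x" by simp
  show False
  proof (cases "y = 0")
    case True
    then show False using h[of 1] xy by simp
  next
    case False
    then have y0: "0 < y" using y by simp
    have "1 < x / y" using xy y0 by simp
    then obtain j where j: "A < (x/y)^j" using real_arch_pow by blast
    have "A * y^j < (x/y)^j * y^j" using j y0 by (intro mult_strict_right_mono) auto
    also have "\<dots> = x^j" using y0 by (simp add: power_divide)
    finally show False using h[of j] by simp
  qed
qed

lemma step_lemma:
  fixes \<Psi> \<Psi>1 \<phi> \<phi>1 :: "complex \<Rightarrow> complex"
  assumes nK: "n \<le> K" and w: "w \<in> ball 0 1"
    and \<phi>h: "\<phi> holomorphic_on ball 0 1" and \<phi>s: "\<phi> ` ball 0 1 \<subseteq> ball 0 1" and \<phi>w: "\<phi> w = w"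
    and \<Psi>1h: "\<Psi>1 holomorphic_on ball 0 1" and \<phi>1h: "\<phi>1 holomorphic_on ball 0 1"
    and \<Psi>e: "\<And>z. z \<in> ball 0 1 \<Longrightarrow> \<Psi> z = (z-w)^a * \<Psi>1 z"
    and \<phi>e: "\<And>z. z \<in> ball 0 1 \<Longrightarrow> \<phi> z - w = (z-w)^b * \<phi>1 z"
    and abK: "a + b*(K-n) = K"
    and h: "h \<in> H2" and qh: "q holomorphic_on ball 0 1" and he: "\<And>z. z \<in> ball 0 1 \<Longrightarrow> h z = (z-w)^K * q z"
  shows "\<exists>q'. q' holomorphic_on ball 0 1 \<and> (\<forall>z\<in>ball 0 1. Dop \<Psi> \<phi> n h z = (z-w)^K * q' z)
     \<and> q' w = (fact K / fact (K-n) * \<Psi>1 w * \<phi>1 w ^ (K-n)) * q w"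
proof -
  obtain g where gh: "g holomorphic_on ball 0 1" and ge: "\<forall>u\<in>ball 0 1. (deriv ^^ n) h u = (u-w)^(K-n) * g u"
    and gw: "g w = fact K / fact (K-n) * q w"
    using dlemma[OF open_ball w H2_hol[OF h] qh he nK] by blast
  define q' where "q' = (\<lambda>z. \<Psi>1 z * \<phi>1 z ^ (K-n) * g (\<phi> z))"
  have "(g \<circ> \<phi>) holomorphic_on ball 0 1" by (rule holomorphic_on_compose_gen[OF \<phi>h gh \<phi>s])
  then have q'h: "q' holomorphic_on ball 0 1" unfolding q'_def o_def using \<Psi>1h \<phi>1h
    by (intro holomorphic_intros) auto
  have "Dop \<Psi> \<phi> n h z = (z-w)^K * q' z" if z: "z \<in> ball 0 1" for z
  proof -
    have pz: "\<phi> z \<in> ball 0 1" using \<phi>s z by (meson image_subset_iff)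
    have "Dop \<Psi> \<phi> n h z = (z-w)^a * \<Psi>1 z * ((z-w)^b * \<phi>1 z)^(K-n) * g (\<phi> z)"
      unfolding Dop_def using \<Psi>e[OF z] ge pz \<phi>e[OF z] by simp
    also have "\<dots> = (z-w)^(a + b*(K-n)) * q' z"
      unfolding q'_def by (simp add: power_mult_distrib power_mult power_add mult_ac)
    finally show ?thesis using abK by simp
  qed
  moreover have "q' w = (fact K / fact (K-n) * \<Psi>1 w * \<phi>1 w ^ (K-n)) * q w"
    unfolding q'_def \<phi>w gw by (simp add: mult_ac)
  ultimately show ?thesis using q'h by blast
qed

lemma key_lemma:
  fixes \<Psi> \<Psi>1 \<phi> \<phi>1 :: "complex \<Rightarrow> complex"
  assumes nK: "n \<le> K" and w: "w \<in> ball 0 1"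
    and \<phi>h: "\<phi> holomorphic_on ball 0 1" and \<phi>s: "\<phi> ` ball 0 1 \<subseteq> ball 0 1" and \<phi>w: "\<phi> w = w"
    and \<Psi>1h: "\<Psi>1 holomorphic_on ball 0 1" and \<phi>1h: "\<phi>1 holomorphic_on ball 0 1"
    and \<Psi>e: "\<And>z. z \<in> ball 0 1 \<Longrightarrow> \<Psi> z = (z-w)^a * \<Psi>1 z"
    and \<phi>e: "\<And>z. z \<in> ball 0 1 \<Longrightarrow> \<phi> z - w = (z-w)^b * \<phi>1 z"
    and abK: "a + b*(K-n) = K"
    and T: "\<And>f. f \<in> H2 \<Longrightarrow> Dop \<Psi> \<phi> n f \<in> H2 \<and> H2_norm (Dop \<Psi> \<phi> n f) \<le> M * H2_norm f"
    and M0: "0 \<le> M"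
  shows "cmod (fact K / fact (K-n) * \<Psi>1 w * \<phi>1 w ^ (K-n)) \<le> M"
proof -
  define lam where "lam = fact K / fact (K-n) * \<Psi>1 w * \<phi>1 w ^ (K-n)"
  define p where "p = (\<lambda>z::complex. ((z-w)/2)^K * 1)"
  have pH: "p \<in> H2" unfolding p_def
  proof (rule H2_mult(1)[OF H2_one])
    show "(\<lambda>z. ((z-w)/2)^K) holomorphic_on ball 0 1" by (intro holomorphic_intros) auto
    fix z :: complex assume z: "z \<in> ball 0 1"
    have "cmod (z - w) \<le> cmod z + cmod w" by (rule norm_triangle_ineq4)
    also have "\<dots> \<le> 2" using z w by simp
    finally show "cmod (((z-w)/2)^K) \<le> 1" by (simp add: norm_power norm_divide power_le_one)
  qed
  define hs where "hs = (\<lambda>j. (Dop \<Psi> \<phi> n ^^ j) p)"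
  have inv: "hs j \<in> H2 \<and> H2_norm (hs j) \<le> M^j * H2_norm p \<and>
     (\<exists>q. q holomorphic_on ball 0 1 \<and> (\<forall>z\<in>ball 0 1. hs j z = (z-w)^K * q z) \<and> q w = lam^j * (1/2^K))" for j
  proof (induction j)
    case 0
    show ?case unfolding hs_def using pH
      by (intro conjI exI[of _ "\<lambda>z. 1/2^K"]) (auto simp: p_def power_divide)
  next
    case (Suc j)
    then obtain q where hj: "hs j \<in> H2" and nj: "H2_norm (hs j) \<le> M^j * H2_norm p"
      and qh: "q holomorphic_on ball 0 1" and qe: "\<forall>z\<in>ball 0 1. hs j z = (z-w)^K * q z"
      and qw: "q w = lam^j * (1/2^K)" by blast
    have hsS: "hs (Suc j) = Dop \<Psi> \<phi> n (hs j)" unfolding hs_def by simp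
    obtain q' where q'h: "q' holomorphic_on ball 0 1" and q'e: "\<forall>z\<in>ball 0 1. Dop \<Psi> \<phi> n (hs j) z = (z-w)^K * q' z"
      and q'w: "q' w = lam * q w"
      using step_lemma[OF nK w \<phi>h \<phi>s \<phi>w \<Psi>1h \<phi>1h \<Psi>e \<phi>e abK hj qh] qe unfolding lam_def by blast
    have "H2_norm (hs (Suc j)) \<le> M * H2_norm (hs j)" using T[OF hj] hsS by simp
    also have "\<dots> \<le> M * (M^j * H2_norm p)" using nj M0 by (rule mult_left_mono)
    finally have "H2_norm (hs (Suc j)) \<le> M^Suc j * H2_norm p" by simp
    then show ?case using T[OF hj] hsS q'h q'e q'w qw by (intro conjI exI[of _ q']) auto
  qed
  obtain C where C: "\<And>h. h \<in> H2 \<Longrightarrow> cmod ((deriv ^^ K) h w) \<le> C * H2_norm h"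
    using cauchy_H2[of w K] w by auto
  have C0: "0 \<le> C"
  proof -
    have "cmod ((deriv ^^ K) p w) \<le> C * H2_norm p" by (rule C[OF pH])
    moreover have "(deriv ^^ K) p w = fact K * (1/2^K)"
      by (rule dlemma_at[OF open_ball w H2_hol[OF pH], of "\<lambda>z. 1/2^K"]) (auto simp: p_def power_divide)
    ultimately have "cmod (fact K * (1/2^K) :: complex) \<le> C * H2_norm p" by metis
    moreover have "0 < cmod (fact K * (1/2^K) :: complex)"
      by (simp add: norm_divide norm_power norm_mult)
    ultimately have "0 < C * H2_norm p" by linarith
    then show ?thesis using H2_norm_nonneg[OF pH] by (simp add: zero_less_mult_iff)
  qed
  have "cmod lam ^ j \<le> (C * H2_norm p * 2^K / fact K) * M^j" for j
  proof -
    obtain q where qh: "q holomorphic_on ball 0 1" and qe: "\<forall>z\<in>ball 0 1. hs j z = (z-w)^K * q z"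
      and qw: "q w = lam^j * (1/2^K)" using inv[of j] by blast
    have hj: "hs j \<in> H2" using inv[of j] by blast
    have d: "(deriv ^^ K) (hs j) w = fact K * q w"
      using dlemma_at[OF open_ball w H2_hol[OF hj] qh] qe by blast
    have "fact K * (cmod lam ^ j / 2^K) = cmod ((deriv ^^ K) (hs j) w)"
      unfolding d qw by (simp add: norm_mult norm_divide norm_power)
    also have "\<dots> \<le> C * H2_norm (hs j)" by (rule C[OF hj])
    also have "\<dots> \<le> C * (M^j * H2_norm p)" using inv[of j] C0 by (intro mult_left_mono) auto
    finally have "fact K * (cmod lam ^ j / 2^K) \<le> C * (M^j * H2_norm p)" .
    then show ?thesis by (simp add: field_simps)
  qed
  then show ?thesis unfolding lam_def[symmetric] using pow_le[of "cmod lam" M "C * H2_norm p * 2^K / fact K"] M0 by simp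
qed



lemma opnorm_props:
  assumes bdd: "bounded_on_H2 T"
    and hom: "\<And>f c z. f \<in> H2 \<Longrightarrow> z \<in> ball 0 1 \<Longrightarrow> T (\<lambda>z. c * f z) z = c * T f z"
  shows "0 \<le> H2_opnorm T" "\<And>f. f \<in> H2 \<Longrightarrow> H2_norm (T f) \<le> H2_opnorm T * H2_norm f"
proof -
  obtain C where TH: "\<And>f. f \<in> H2 \<Longrightarrow> T f \<in> H2" and TC: "\<And>f. f \<in> H2 \<Longrightarrow> H2_norm (T f) \<le> C * H2_norm f"
    using bdd unfolding bounded_on_H2_def by blast
  define A where "A = {H2_norm (T f) | f. f \<in> H2 \<and> H2_norm f \<le> 1}"
  have bA: "bdd_above A"
  proof -
    have "x \<le> max C 0" if "x \<in> A" for x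
    proof -
      obtain f where f: "f \<in> H2" "H2_norm f \<le> 1" and x: "x = H2_norm (T f)" using \<open>x \<in> A\<close> A_def by blast
      have "C * H2_norm f \<le> max C 0 * H2_norm f" using H2_norm_nonneg[OF f(1)] by (intro mult_right_mono) auto
      also have "\<dots> \<le> max C 0" using f(2) H2_norm_nonneg[OF f(1)] by (intro mult_left_le) auto
      finally show ?thesis using TC[OF f(1)] x by simp
    qed
    then show ?thesis unfolding bdd_above_def by blast
  qed
  have inA: "H2_norm (T f) \<le> H2_opnorm T" if "f \<in> H2" "H2_norm f \<le> 1" for f
    unfolding H2_opnorm_def A_def[symmetric] using bA that by (intro cSup_upper) (auto simp: A_def)
  show M0: "0 \<le> H2_opnorm T"
    using inA[OF H2_zero(1)] H2_zero(2) H2_norm_nonneg[OF TH[OF H2_zero(1)]] by simp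
  fix f assume f: "f \<in> H2"
  show "H2_norm (T f) \<le> H2_opnorm T * H2_norm f"
  proof (cases "H2_norm f = 0")
    case True
    then show ?thesis using TC[OF f] H2_norm_nonneg[OF TH[OF f]] by simp
  next
    case False
    then have N: "0 < H2_norm f" using H2_norm_nonneg[OF f] by simp
    define c where "c = complex_of_real (1 / H2_norm f)"
    have cc: "cmod c = 1 / H2_norm f" unfolding c_def using N by (simp add: norm_divide)
    have gH: "(\<lambda>z. c * f z) \<in> H2" by (rule H2_scale(1)[OF f])
    have gn: "H2_norm (\<lambda>z. c * f z) = 1" using H2_scale(2)[OF f, of c] cc N by simp
    have "H2_norm (T (\<lambda>z. c * f z)) = H2_norm (\<lambda>z. c * T f z)"
      using H2_cong(2)[OF TH[OF gH], of "\<lambda>z. c * T f z"] hom[OF f] by simp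
    also have "\<dots> = cmod c * H2_norm (T f)" by (rule H2_scale(2)[OF TH[OF f]])
    finally have "H2_norm (T f) / H2_norm f \<le> H2_opnorm T" using inA[OF gH] gn cc by simp
    then show ?thesis using N by (simp add: field_simps)
  qed
qed

lemma Dop_hom:
  assumes \<phi>s: "\<phi> ` ball 0 1 \<subseteq> ball 0 1" and f: "f \<in> H2" and z: "z \<in> ball 0 1"
  shows "Dop \<Psi> \<phi> n (\<lambda>z. c * f z) z = c * Dop \<Psi> \<phi> n f z"
proof -
  have "\<phi> z \<in> ball 0 1" using \<phi>s z by (meson image_subset_iff)
  then show ?thesis unfolding Dop_def using higher_deriv_cmult[OF H2_hol[OF f] _ open_ball] by simp
qed

lemma blaschke:
  assumes "w \<in> ball (0::complex) 1" "z \<in> ball 0 1"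
  shows "1 - cnj w * z \<noteq> 0" "cmod ((w - z) / (1 - cnj w * z)) \<le> 1"
proof -
  have "norm w * norm z \<le> norm w * 1" using assms by (intro mult_left_mono) auto
  then have "cmod (cnj w * z) < 1" using assms by (simp add: norm_mult)
  then show "1 - cnj w * z \<noteq> 0" by auto
  have "norm (Moebius_function 0 w z) < 1" using assms by (intro Moebius_function_norm_lt_1) auto
  then show "cmod ((w - z) / (1 - cnj w * z)) \<le> 1"
    unfolding Moebius_function_simple by (simp add: norm_divide norm_minus_commute)
qed

lemma blaschke_case:
  fixes \<psi> \<psi>1 \<phi> :: "complex \<Rightarrow> complex"
  assumes w: "w \<in> ball 0 1" and en: "e \<le> n" and \<psi>1h: "\<psi>1 holomorphic_on ball 0 1"
    and \<psi>h: "\<psi> holomorphic_on ball 0 1"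
    and \<psi>e: "\<And>z. z \<in> ball 0 1 \<Longrightarrow> \<psi> z = (z-w)^(n-e) * \<psi>1 z"
    and Dbd: "\<And>f. f \<in> H2 \<Longrightarrow> Dop \<psi> \<phi> n f \<in> H2 \<and> H2_norm (Dop \<psi> \<phi> n f) \<le> M * H2_norm f"
  shows "\<exists>\<chi>1. \<chi>1 holomorphic_on ball 0 1
     \<and> (\<forall>z\<in>ball 0 1. \<psi> z * ((w - z) / (1 - cnj w * z)) ^ e = (z-w)^n * \<chi>1 z)
     \<and> (\<lambda>z. \<psi> z * ((w - z) / (1 - cnj w * z)) ^ e) holomorphic_on ball 0 1
     \<and> (\<forall>f\<in>H2. Dop (\<lambda>z. \<psi> z * ((w - z) / (1 - cnj w * z)) ^ e) \<phi> n f \<in> H2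
          \<and> H2_norm (Dop (\<lambda>z. \<psi> z * ((w - z) / (1 - cnj w * z)) ^ e) \<phi> n f) \<le> M * H2_norm f)"
proof -
  define \<chi>1 where "\<chi>1 = (\<lambda>z. \<psi>1 z * (-1 / (1 - cnj w * z)) ^ e)"
  have nz: "\<And>z. z \<in> ball 0 1 \<Longrightarrow> 1 - cnj w * z \<noteq> 0" using blaschke(1)[OF w] by blast
  have bh: "(\<lambda>z. ((w - z) / (1 - cnj w * z)) ^ e) holomorphic_on ball 0 1"
    using nz by (intro holomorphic_intros) auto
  have h1: "\<chi>1 holomorphic_on ball 0 1" unfolding \<chi>1_def using nz \<psi>1h by (intro holomorphic_intros) auto
  have eq: "\<psi> z * ((w - z) / (1 - cnj w * z)) ^ e = (z-w)^n * \<chi>1 z" if z: "z \<in> ball 0 1" for z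
  proof -
    have "(w - z) / (1 - cnj w * z) = (z - w) * (-1 / (1 - cnj w * z))"
      by (simp add: divide_simps)
    then have B: "((w - z) / (1 - cnj w * z)) ^ e = (z-w)^e * (-1 / (1 - cnj w * z))^e"
      by (simp only: power_mult_distrib)
    have "\<psi> z * ((w - z) / (1 - cnj w * z)) ^ e = (z-w)^(n-e) * (z-w)^e * \<chi>1 z"
      unfolding \<chi>1_def \<psi>e[OF z] B by (simp only: mult_ac)
    also have "\<dots> = (z-w)^n * \<chi>1 z" using en by (simp add: power_add[symmetric])
    finally show ?thesis .
  qed
  have hh: "(\<lambda>z. \<psi> z * ((w - z) / (1 - cnj w * z)) ^ e) holomorphic_on ball 0 1"
    by (rule holomorphic_on_mult[OF \<psi>h bh])
  have T: "Dop (\<lambda>z. \<psi> z * ((w - z) / (1 - cnj w * z)) ^ e) \<phi> n f \<in> H2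
     \<and> H2_norm (Dop (\<lambda>z. \<psi> z * ((w - z) / (1 - cnj w * z)) ^ e) \<phi> n f) \<le> M * H2_norm f" if f: "f \<in> H2" for f
  proof -
    have e: "Dop (\<lambda>z. \<psi> z * ((w - z) / (1 - cnj w * z)) ^ e) \<phi> n f
        = (\<lambda>z. ((w - z) / (1 - cnj w * z)) ^ e * Dop \<psi> \<phi> n f z)"
      unfolding Dop_def by (simp add: mult_ac)
    have b1: "cmod (((w - z) / (1 - cnj w * z)) ^ e) \<le> 1" if "z \<in> ball 0 1" for z
      using blaschke(2)[OF w that] by (simp add: norm_power power_le_one)
    show ?thesis unfolding e using H2_mult[OF conjunct1[OF Dbd[OF f]] bh b1] conjunct2[OF Dbd[OF f]] by auto
  qed
  show ?thesis using h1 eq hh T by blast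
qed

lemma chi_lemma:
  fixes \<psi> \<phi> :: "complex \<Rightarrow> complex"
  assumes w: "w \<in> ball 0 1" and \<psi>h: "\<psi> holomorphic_on ball 0 1"
    and Dbd: "\<And>f. f \<in> H2 \<Longrightarrow> Dop \<psi> \<phi> n f \<in> H2 \<and> H2_norm (Dop \<psi> \<phi> n f) \<le> M * H2_norm f"
  shows "\<exists>\<chi>1. \<chi>1 holomorphic_on ball 0 1
     \<and> (\<forall>z\<in>ball 0 1. chi \<psi> n w z = (z-w)^n * \<chi>1 z)
     \<and> chi \<psi> n w holomorphic_on ball 0 1
     \<and> (\<forall>f\<in>H2. Dop (chi \<psi> n w) \<phi> n f \<in> H2 \<and> H2_norm (Dop (chi \<psi> n w) \<phi> n f) \<le> M * H2_norm f)"
proof (cases "\<forall>j<n. (deriv ^^ j) \<psi> w = 0")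
  case True
  then have c: "chi \<psi> n w = \<psi>" unfolding chi_def by simp
  obtain q where "q holomorphic_on ball 0 1" "\<forall>z\<in>ball 0 1. \<psi> z = (z-w)^n * q z"
    using factor_lemma[OF open_ball w \<psi>h, of n] True by blast
  then show ?thesis unfolding c using \<psi>h Dbd by blast
next
  case False
  note F = False
  show ?thesis
  proof (cases "\<psi> w \<noteq> 0")
    case True
    then have c: "chi \<psi> n w = (\<lambda>z. \<psi> z * ((w - z) / (1 - cnj w * z)) ^ n)" by (simp only: chi_def if_not_P[OF F] if_P[OF True] not_False_eq_True if_True)
    show ?thesis unfolding c by (rule blaschke_case[OF w le_refl \<psi>h \<psi>h _ Dbd]) simp
  next
    case False
    define m where "m = (LEAST m. (deriv ^^ m) \<psi> w \<noteq> 0)"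
    have c: "chi \<psi> n w = (\<lambda>z. \<psi> z * ((w - z) / (1 - cnj w * z)) ^ (n - m))"
      by (simp only: chi_def m_def if_not_P[OF F] if_not_P[OF False] Let_def)
    obtain j where j: "j < n" "(deriv ^^ j) \<psi> w \<noteq> 0" using F by blast
    have mj: "m \<le> j" unfolding m_def using j(2) by (rule Least_le)
    have zero: "(deriv ^^ i) \<psi> w = 0" if "i < m" for i
      using not_less_Least[of i "\<lambda>m. (deriv ^^ m) \<psi> w \<noteq> 0"] that unfolding m_def by blast
    obtain q where qh: "q holomorphic_on ball 0 1" and qe: "\<forall>z\<in>ball 0 1. \<psi> z = (z-w)^m * q z"
      using factor_lemma[OF open_ball w \<psi>h, of m] zero by blast
    have e: "n - (n - m) = m" using mj j by simp
    show ?thesis unfolding c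
      by (rule blaschke_case[OF w diff_le_self qh \<psi>h _ Dbd]) (use qe e in auto)
  qed
qed



theorem proposition3p1:
  fixes \<psi> \<phi> :: "complex \<Rightarrow> complex" and n :: nat and w :: complex
  assumes n_pos: "n \<ge> 1"
    and \<psi>_hol: "\<psi> holomorphic_on ball 0 1"
    and \<phi>_hol: "\<phi> holomorphic_on ball 0 1"
    and \<phi>_self: "\<phi> ` ball 0 1 \<subseteq> ball 0 1"
    and bdd: "bounded_on_H2 (Dop \<psi> \<phi> n)"
    and w_in: "w \<in> ball 0 1"
    and fix_w: "\<phi> w = w"
  defines "N \<equiv> nat \<lfloor>real n / (1 - cmod (deriv \<phi> w))\<rfloor>"
  shows "(deriv \<phi> w \<noteq> 0 \<longrightarrow>
            H2_opnorm (Dop \<psi> \<phi> n) \<ge>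
              cmod ((deriv ^^ n) (chi \<psi> n w) w) * real (N choose n) * cmod (deriv \<phi> w) ^ (N - n))
       \<and> (deriv \<phi> w = 0 \<longrightarrow>
            H2_opnorm (Dop \<psi> \<phi> n) \<ge> cmod ((deriv ^^ n) (chi \<psi> n w) w))
       \<and> (deriv \<phi> w = 0 \<and> (deriv ^^ 2) \<psi> w = 0 \<and> n = 1 \<longrightarrow>
            H2_opnorm (Dop \<psi> \<phi> 1) \<ge>
              max (cmod (deriv (chi \<psi> 1 w) w)) (cmod (\<psi> w * (deriv ^^ 2) \<phi> w)))"
proof -
  define M where "M = H2_opnorm (Dop \<psi> \<phi> n)"
  have hom: "\<And>f c z. f \<in> H2 \<Longrightarrow> z \<in> ball 0 1 \<Longrightarrow> Dop \<psi> \<phi> n (\<lambda>z. c * f z) z = c * Dop \<psi> \<phi> n f z"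
    using Dop_hom[OF \<phi>_self] by blast
  have M0: "0 \<le> M" and Mb: "\<And>f. f \<in> H2 \<Longrightarrow> H2_norm (Dop \<psi> \<phi> n f) \<le> M * H2_norm f"
    using opnorm_props[OF bdd hom] unfolding M_def by auto
  have DH: "\<And>f. f \<in> H2 \<Longrightarrow> Dop \<psi> \<phi> n f \<in> H2" using bdd unfolding bounded_on_H2_def by blast
  have Dbd: "\<And>f. f \<in> H2 \<Longrightarrow> Dop \<psi> \<phi> n f \<in> H2 \<and> H2_norm (Dop \<psi> \<phi> n f) \<le> M * H2_norm f"
    using DH Mb by blast
  obtain \<chi>1 where \<chi>1h: "\<chi>1 holomorphic_on ball 0 1" and \<chi>e: "\<forall>z\<in>ball 0 1. chi \<psi> n w z = (z-w)^n * \<chi>1 z"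
    and \<chi>h: "chi \<psi> n w holomorphic_on ball 0 1"
    and Tbd: "\<forall>f\<in>H2. Dop (chi \<psi> n w) \<phi> n f \<in> H2 \<and> H2_norm (Dop (chi \<psi> n w) \<phi> n f) \<le> M * H2_norm f"
    using chi_lemma[OF w_in \<psi>_hol Dbd] by blast
  define \<phi>1 where "\<phi>1 = (\<lambda>z. if z = w then deriv \<phi> w else (\<phi> z - \<phi> w)/(z - w))"
  have \<phi>1h: "\<phi>1 holomorphic_on ball 0 1" using pole_lemma_open[OF \<phi>_hol open_ball] unfolding \<phi>1_def by simp
  have \<phi>e: "\<And>z. z \<in> ball 0 1 \<Longrightarrow> \<phi> z - w = (z-w)^1 * \<phi>1 z" using fix_w by (auto simp: \<phi>1_def)
  have dchi: "(deriv ^^ n) (chi \<psi> n w) w = fact n * \<chi>1 w"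
    using dlemma_at[OF open_ball w_in \<chi>h \<chi>1h] \<chi>e by blast
  have gen: "cmod ((deriv ^^ n) (chi \<psi> n w) w) * real (K choose n) * cmod (deriv \<phi> w) ^ (K - n) \<le> M"
    if nK: "n \<le> K" for K
  proof -
    have "cmod (fact K / fact (K-n) * \<chi>1 w * \<phi>1 w ^ (K-n)) \<le> M"
      by (rule key_lemma[where \<Psi>="chi \<psi> n w" and a=n, OF nK w_in \<phi>_hol \<phi>_self fix_w \<chi>1h \<phi>1h _ \<phi>e _ _ M0]) (use \<chi>e nK Tbd in auto)
    moreover have "(fact K / fact (K-n) :: complex) = of_nat (K choose n) * fact n"
      using binomial_fact[OF nK, where 'a=complex] by (simp add: field_simps)
    ultimately have "cmod (of_nat (K choose n) * (fact n * \<chi>1 w) * deriv \<phi> w ^ (K-n)) \<le> M"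
      by (simp add: \<phi>1_def mult_ac)
    then show ?thesis unfolding dchi by (simp add: norm_mult norm_power mult_ac)
  qed
  have P1: "deriv \<phi> w \<noteq> 0 \<longrightarrow>
            H2_opnorm (Dop \<psi> \<phi> n) \<ge>
              cmod ((deriv ^^ n) (chi \<psi> n w) w) * real (N choose n) * cmod (deriv \<phi> w) ^ (N - n)"
  proof (cases "n \<le> N")
    case True then show ?thesis using gen[of N] M_def by simp
  next
    case False then show ?thesis using M0 M_def by (simp add: binomial_eq_0)
  qed
  have P2: "deriv \<phi> w = 0 \<longrightarrow> H2_opnorm (Dop \<psi> \<phi> n) \<ge> cmod ((deriv ^^ n) (chi \<psi> n w) w)"
    using gen[of n] M_def by simp
  have P3: "H2_opnorm (Dop \<psi> \<phi> 1) \<ge> max (cmod (deriv (chi \<psi> 1 w) w)) (cmod (\<psi> w * (deriv ^^ 2) \<phi> w))"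
    if h3: "deriv \<phi> w = 0" "n = 1"
  proof -
    have A: "cmod (deriv (chi \<psi> 1 w) w) \<le> M" using P2 h3 M_def by simp
    have hd: "(deriv ^^ j) (\<lambda>z. \<phi> z - w) w = (deriv ^^ j) \<phi> w - (if j = 0 then w else 0)" for j
      using higher_deriv_diff[OF \<phi>_hol holomorphic_on_const open_ball w_in, of j] by simp
    have z2: "(deriv ^^ j) (\<lambda>z. \<phi> z - w) w = 0" if "j < 2" for j
    proof -
      have "j = 0 \<or> j = 1" using that by auto
      then show ?thesis using hd[of j] fix_w h3 by auto
    qed
    obtain \<phi>2 where \<phi>2h: "\<phi>2 holomorphic_on ball 0 1" and \<phi>2e: "\<forall>z\<in>ball 0 1. \<phi> z - w = (z-w)^2 * \<phi>2 z"
      and \<phi>2d: "(deriv ^^ 2) (\<lambda>z. \<phi> z - w) w = fact 2 * \<phi>2 w"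
    proof -
      have "(\<lambda>z. \<phi> z - w) holomorphic_on ball 0 1" using \<phi>_hol by (intro holomorphic_intros)
      from factor_lemma[OF open_ball w_in this, of 2] z2 that show thesis by (auto simp del: fact_Suc)
    qed
    have d2: "(deriv ^^ 2) \<phi> w = 2 * \<phi>2 w" using \<phi>2d hd[of 2] by simp
    have Dbd1: "\<And>f. f \<in> H2 \<Longrightarrow> Dop \<psi> \<phi> 1 f \<in> H2 \<and> H2_norm (Dop \<psi> \<phi> 1 f) \<le> M * H2_norm f"
      using Dbd h3 by simp
    have "cmod (fact 2 / fact (2-1) * \<psi> w * \<phi>2 w ^ (2-1)) \<le> M"
      by (rule key_lemma[where \<Psi>=\<psi> and a=0 and b=2 and K=2 and n=1 and M=M,
            OF _ w_in \<phi>_hol \<phi>_self fix_w \<psi>_hol \<phi>2h])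
         (use \<phi>2e Dbd1 M0 in auto)
    then have B: "cmod (\<psi> w * (deriv ^^ 2) \<phi> w) \<le> M" unfolding d2 by (simp add: mult_ac)
    show ?thesis using A B M_def h3 by simp
  qed
  show ?thesis using P1 P2 P3 by blast
qed

end
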